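(* Let $m\equiv4\pmod8$, let $\mathfrak v_m$ be the irreducible $C(m)$-module, and let $\mathfrak v_m^p=\mathfrak w_+^p\oplus\mathfrak w_-^p$ be the decomposition into eigenspaces of $K_m$ with eigenvalues $\pm1$. (1) If $\mathcal L_1\subset\mathfrak w_+^p$ is a $C^+(m)$-submodule and $\mathcal L_1^\perp$ is its orthogonal complement in $\mathfrak w_+^p$, then $\mathcal L=\mathcal L_1+J_m(\mathcal L_1^\perp)$ is a Lagrangian subspace of $\mathfrak v_m^p$. (2) Every Lagrangian subspace of $\mathfrak v_m^p$ is of this form.
   Context: $C(m)$ is the real Clifford algebra of $\mathbb R^m$ (relations $z^2=-\langle z,z\rangle1$), $C^+(m)$ its even subalgebra (generated by products of two elements of $\mathbb R^m$). Fix an orthonormal basis $z_1,\dots,z_m$ of $\mathbb R^m$, $J_i=J_{z_i}$, and $K_m=J_1\cdots J_m$ (symmetric with $K_m^2=1$ when $m\equiv0\pmod4$). $\mathfrak v_m^p$ is the direct sum of $p$ copies of the irreducible module, with an inner product making each $J_z$ skew-symmetric, and bracket $\mathfrak v\wedge\mathfrak v\to\mathbb R^m$ given by $\langle z,[u,v]\rangle=(J_zu,v)$. A Lagrangian subspace is $\mathcal L\subset\mathfrak v_m^p$ with $[\mathcal L,\mathcal L]=0$ and $\dim\mathcal L=\frac12\dim\mathfrak v_m^p$. *)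

theory Defs
  imports "HOL-Analysis.Analysis"
begin

text \<open>A real Clifford module for C(m): a finite-dimensional real inner product space
  (the type 'v) with operators J 1, ..., J m (J i = J_{z_i} for an orthonormal basis
  z_1..z_m of R^m), linear, skew-symmetric, satisfying the Clifford relations
  J_z^2 = -|z|^2, i.e. J_i^2 = -1 and J_i J_j = - J_j J_i for i ~= j.\<close>
definition clifford_module :: "nat \<Rightarrow> (nat \<Rightarrow> 'v::euclidean_space \<Rightarrow> 'v) \<Rightarrow> bool" where
  "clifford_module m J \<longleftrightarrow>
     (\<forall>i\<in>{1..m}. linear (J i)) \<and>
     (\<forall>i\<in>{1..m}. \<forall>x. J i (J i x) = - x) \<and>
     (\<forall>i\<in>{1..m}. \<forall>j\<in>{1..m}. i \<noteq> j \<longrightarrow> (\<forall>x. J i (J j x) = - J j (J i x))) \<and>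
     (\<forall>i\<in>{1..m}. \<forall>x y. inner (J i x) y = - inner x (J i y))"

fun Kop :: "(nat \<Rightarrow> 'v \<Rightarrow> 'v) \<Rightarrow> nat \<Rightarrow> 'v \<Rightarrow> 'v" where
  "Kop J 0 = id"
| "Kop J (Suc k) = Kop J k \<circ> J (Suc k)"

definition wplus :: "nat \<Rightarrow> (nat \<Rightarrow> 'v::euclidean_space \<Rightarrow> 'v) \<Rightarrow> 'v set" where
  "wplus m J = {x. Kop J m x = x}"

text \<open>Bracket [u,v] in R^m: its z_i-coordinate is <z_i,[u,v]> = (J_i u, v).
  [L,L] = 0 means all these coordinates vanish.\<close>
definition bracket_zero :: "nat \<Rightarrow> (nat \<Rightarrow> 'v::euclidean_space \<Rightarrow> 'v) \<Rightarrow> 'v set \<Rightarrow> bool" where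
  "bracket_zero m J L \<longleftrightarrow> (\<forall>u\<in>L. \<forall>v\<in>L. \<forall>i\<in>{1..m}. inner (J i u) v = 0)"

definition lagrangian :: "nat \<Rightarrow> (nat \<Rightarrow> 'v::euclidean_space \<Rightarrow> 'v) \<Rightarrow> 'v set \<Rightarrow> bool" where
  "lagrangian m J L \<longleftrightarrow> subspace L \<and> bracket_zero m J L \<and> 2 * dim L = DIM('v)"

text \<open>C^+(m)-submodule of w_+: a linear subspace of w_+ invariant under the generators
  J_i J_j of the even subalgebra.\<close>
definition cplus_submodule_of_wplus :: "nat \<Rightarrow> (nat \<Rightarrow> 'v::euclidean_space \<Rightarrow> 'v) \<Rightarrow> 'v set \<Rightarrow> bool" where
  "cplus_submodule_of_wplus m J L1 \<longleftrightarrow> subspace L1 \<and> L1 \<subseteq> wplus m J \<and>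
     (\<forall>i\<in>{1..m}. \<forall>j\<in>{1..m}. \<forall>x\<in>L1. J i (J j x) \<in> L1)"

definition perp_in_wplus :: "nat \<Rightarrow> (nat \<Rightarrow> 'v::euclidean_space \<Rightarrow> 'v) \<Rightarrow> 'v set \<Rightarrow> 'v set" where
  "perp_in_wplus m J L1 = {x \<in> wplus m J. \<forall>y\<in>L1. inner x y = 0}"

definition lag_of :: "nat \<Rightarrow> (nat \<Rightarrow> 'v::euclidean_space \<Rightarrow> 'v) \<Rightarrow> 'v set \<Rightarrow> 'v set" where
  "lag_of m J L1 = {a + J m b | a b. a \<in> L1 \<and> b \<in> perp_in_wplus m J L1}"

end

theory Submission imports Defs begin

lemma cm_lin: "clifford_module m J \<Longrightarrow> 1 \<le> i \<Longrightarrow> i \<le> m \<Longrightarrow> linear (J i)"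
  by (simp add: clifford_module_def)
lemma cm_sq: "clifford_module m J \<Longrightarrow> 1 \<le> i \<Longrightarrow> i \<le> m \<Longrightarrow> J i (J i x) = - x"
  by (simp add: clifford_module_def)
lemma cm_anti: "clifford_module m J \<Longrightarrow> 1 \<le> i \<Longrightarrow> i \<le> m \<Longrightarrow> 1 \<le> j \<Longrightarrow> j \<le> m \<Longrightarrow> i \<noteq> j
   \<Longrightarrow> J i (J j x) = - J j (J i x)"
proof -
  assume a: "clifford_module m J" "1 \<le> i" "i \<le> m" "1 \<le> j" "j \<le> m" "i \<noteq> j"
  have "\<forall>i\<in>{1..m}. \<forall>j\<in>{1..m}. i \<noteq> j \<longrightarrow> (\<forall>x. J i (J j x) = - J j (J i x))"
    using a(1) unfolding clifford_module_def by blast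
  then show ?thesis using a(2-6) by (meson atLeastAtMost_iff)
qed
lemma cm_skew: "clifford_module m J \<Longrightarrow> 1 \<le> i \<Longrightarrow> i \<le> m \<Longrightarrow> inner (J i x) y = - inner x (J i y)"
  by (simp add: clifford_module_def)
lemma cm_orth: "clifford_module m J \<Longrightarrow> 1 \<le> i \<Longrightarrow> i \<le> m \<Longrightarrow> inner (J i x) (J i y) = inner x y"
  using cm_skew[of m J i x "J i y"] cm_sq[of m J i y] by simp

lemma Kop_linear: "clifford_module m J \<Longrightarrow> k \<le> m \<Longrightarrow> linear (Kop J k)"
proof (induction k)
  case 0 then show ?case by (simp add: linear_iff)
next
  case (Suc k)
  have "linear (Kop J k \<circ> J (Suc k))"
    by (rule linear_compose) (use Suc cm_lin[of m J "Suc k"] in auto)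
  then show ?case by (simp only: Kop.simps)
qed

lemma Kop_inner: "clifford_module m J \<Longrightarrow> k \<le> m \<Longrightarrow> inner (Kop J k x) (Kop J k y) = inner x y"
proof (induction k arbitrary: x y)
  case 0 then show ?case by simp
next
  case (Suc k) then show ?case using cm_orth[of m J "Suc k"] by simp
qed

lemma Kop_comm: "clifford_module m J \<Longrightarrow> k \<le> m \<Longrightarrow> 1 \<le> i \<Longrightarrow> i \<le> m \<Longrightarrow>
  J i (Kop J k x) = ((-1::real)^(if i \<le> k then k - 1 else k)) *\<^sub>R Kop J k (J i x)"
proof (induction k arbitrary: x)
  case 0 then show ?case by simp
next
  case (Suc k)
  have lk: "linear (Kop J k)" using Kop_linear[of m J k] Suc.prems by simp
  have IH: "J i (Kop J k y) = ((-1::real)^(if i \<le> k then k - 1 else k)) *\<^sub>R Kop J k (J i y)" for y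
    using Suc by simp
  show ?case
  proof (cases "i = Suc k")
    case True
    then show ?thesis using IH[of "J (Suc k) x"] by simp
  next
    case False
    have a: "J i (J (Suc k) x) = - J (Suc k) (J i x)"
      using cm_anti[of m J i "Suc k" x] Suc False by simp
    have "J i (Kop J (Suc k) x) = ((-1::real)^(if i \<le> k then k - 1 else k)) *\<^sub>R Kop J k (- J (Suc k) (J i x))"
      using IH[of "J (Suc k) x"] a by simp
    also have "\<dots> = - (((-1::real)^(if i \<le> k then k - 1 else k)) *\<^sub>R Kop J k (J (Suc k) (J i x)))"
      using linear_neg[OF lk] by simp
    also have "\<dots> = ((-1::real)^(if i \<le> Suc k then Suc k - 1 else Suc k)) *\<^sub>R Kop J (Suc k) (J i x)"
    proof (cases "i \<le> k")
      case True
      then obtain k' where "k = Suc k'" using Suc.prems(3) by (cases k) auto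
      then show ?thesis using True by simp
    next
      case False
      then show ?thesis using \<open>i \<noteq> Suc k\<close> by simp
    qed
    finally show ?thesis .
  qed
qed

lemma Kop_sq: "clifford_module m J \<Longrightarrow> k \<le> m \<Longrightarrow> Kop J k (Kop J k x) = ((-1::real)^(k*(k+1) div 2)) *\<^sub>R x"
proof (induction k arbitrary: x)
  case 0 then show ?case by simp
next
  case (Suc k)
  have lk: "linear (Kop J k)" using Kop_linear[of m J k] Suc.prems by simp
  have c: "J (Suc k) (Kop J k y) = ((-1::real)^k) *\<^sub>R Kop J k (J (Suc k) y)" for y
    using Kop_comm[of m J k "Suc k" y] Suc by simp
  have "Kop J (Suc k) (Kop J (Suc k) x) = Kop J k (((-1::real)^k) *\<^sub>R Kop J k (J (Suc k) (J (Suc k) x)))"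
    using c by simp
  also have "\<dots> = ((-1::real)^k) *\<^sub>R Kop J k (Kop J k (- x))"
    using cm_sq[of m J "Suc k" x] Suc linear_scale[OF lk] by simp
  also have "\<dots> = ((-1::real)^k) *\<^sub>R (- (((-1::real)^(k*(k+1) div 2)) *\<^sub>R x))"
    using Suc linear_neg[OF lk] by simp
  also have "\<dots> = ((-1::real)^(Suc k * (Suc k + 1) div 2)) *\<^sub>R x"
  proof -
    have "Suc k * (Suc k + 1) div 2 = k*(k+1) div 2 + k + 1"
      by (induction k) auto
    then show ?thesis by (simp add: power_add)
  qed
  finally show ?case .
qed


context
  fixes m :: nat and J :: "nat \<Rightarrow> 'v::euclidean_space \<Rightarrow> 'v"
  assumes cm: "clifford_module m J" and m8: "m mod 8 = 4"
begin

lemma m_ge: "1 \<le> m" using m8 by presburger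

lemma m_even: "even m" using m8 by presburger

lemma lin: "i \<in> {1..m} \<Longrightarrow> linear (J i)"
  using cm_lin[OF cm] by auto

lemma sq: "i \<in> {1..m} \<Longrightarrow> J i (J i x) = - x"
  using cm_sq[OF cm] by auto

lemma orth: "i \<in> {1..m} \<Longrightarrow> inner (J i x) (J i y) = inner x y"
  using cm_orth[OF cm] by auto

lemma skew: "i \<in> {1..m} \<Longrightarrow> inner (J i x) y = - inner x (J i y)"
  using cm_skew[OF cm] by auto

lemma Klin: "linear (Kop J m)"
  using Kop_linear[OF cm] by simp

lemma KK: "Kop J m (Kop J m x) = x"
proof -
  have "\<exists>t. m = 4*t" using m8 by presburger
  then obtain t where t: "m = 4*t" by blast
  have "m*(m+1) = 2*(2*(t*(4*t+1)))" by (simp add: t algebra_simps)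
  then have "m*(m+1) div 2 = 2*(t*(4*t+1))" by simp
  then have "even (m*(m+1) div 2)" by simp
  then have "(-1::real)^(m*(m+1) div 2) = 1" by (rule neg_one_even_power)
  then have e: "(-1::real)^(m*(m+1) div 2) = 1" .
  have "Kop J m (Kop J m x) = ((-1::real)^(m*(m+1) div 2)) *\<^sub>R x"
    by (rule Kop_sq[OF cm]) simp
  then show ?thesis by (simp only: e scaleR_one)
qed

lemma KJ: "i \<in> {1..m} \<Longrightarrow> J i (Kop J m x) = - Kop J m (J i x)"
proof -
  assume i: "i \<in> {1..m}"
  have "odd (m - 1)" using m_even m_ge by simp
  then have "(-1::real)^(m-1) = -1" by simp
  then show ?thesis using Kop_comm[OF cm, of m i x] i by simp
qed

lemma J_pm: "i \<in> {1..m} \<Longrightarrow> Kop J m x = x \<Longrightarrow> Kop J m (J i x) = - J i x"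
proof -
  assume i: "i \<in> {1..m}" and x: "Kop J m x = x"
  have "J i x = - Kop J m (J i x)" using KJ[OF i, of x] x by simp
  then show ?thesis by (metis minus_minus)
qed

lemma J_mp: "i \<in> {1..m} \<Longrightarrow> Kop J m x = - x \<Longrightarrow> Kop J m (J i x) = J i x"
  using KJ[of i x] linear_neg[OF lin, of i x] by simp

lemma pm_orth: "Kop J m x = x \<Longrightarrow> Kop J m y = - y \<Longrightarrow> inner x y = 0"
  using Kop_inner[OF cm, of m x y] by simp

lemma Jinj: "i \<in> {1..m} \<Longrightarrow> inj (J i)"
proof -
  assume i: "i \<in> {1..m}"
  show ?thesis
  proof (rule injI)
    fix x y assume "J i x = J i y"
    then have "J i (J i x) = J i (J i y)" by simp
    then show "x = y" using sq[OF i] by simp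
  qed
qed

lemma decomp:
  shows "x = (1/2) *\<^sub>R (x + Kop J m x) + (1/2) *\<^sub>R (x - Kop J m x)"
    and "Kop J m ((1/2) *\<^sub>R (x + Kop J m x)) = (1/2) *\<^sub>R (x + Kop J m x)"
    and "Kop J m ((1/2) *\<^sub>R (x - Kop J m x)) = - ((1/2) *\<^sub>R (x - Kop J m x))"
proof -
  show "x = (1/2) *\<^sub>R (x + Kop J m x) + (1/2) *\<^sub>R (x - Kop J m x)"
  proof -
    have "(1/2) *\<^sub>R (x + Kop J m x) + (1/2) *\<^sub>R (x - Kop J m x)
        = (1/2::real) *\<^sub>R ((x + Kop J m x) + (x - Kop J m x))"
      by (simp only: scaleR_add_right)
    also have "(x + Kop J m x) + (x - Kop J m x) = 2 *\<^sub>R x"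
      by (simp add: scaleR_2)
    finally show ?thesis by simp
  qed
  show "Kop J m ((1/2) *\<^sub>R (x + Kop J m x)) = (1/2) *\<^sub>R (x + Kop J m x)"
    by (simp add: linear_scale[OF Klin] linear_add[OF Klin] KK algebra_simps)
  show "Kop J m ((1/2) *\<^sub>R (x - Kop J m x)) = - ((1/2) *\<^sub>R (x - Kop J m x))"
    by (simp add: linear_scale[OF Klin] linear_diff[OF Klin] KK algebra_simps)
qed

lemma wplus_sub: "subspace (wplus m J)"
  unfolding subspace_def wplus_def
  by (simp add: linear_0[OF Klin] linear_add[OF Klin] linear_scale[OF Klin])



lemma part1:
  assumes L1: "cplus_submodule_of_wplus m J L1"
  shows "lagrangian m J (lag_of m J L1)"
proof -
  let ?K = "Kop J m"
  let ?P = "perp_in_wplus m J L1"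
  let ?L = "lag_of m J L1"
  have sL1: "subspace L1" using L1 by (simp add: cplus_submodule_of_wplus_def)
  have L1w: "\<And>x. x \<in> L1 \<Longrightarrow> ?K x = x"
    using L1 by (auto simp: cplus_submodule_of_wplus_def wplus_def)
  have L1c: "\<And>i j x. i\<in>{1..m} \<Longrightarrow> j\<in>{1..m} \<Longrightarrow> x\<in>L1 \<Longrightarrow> J i (J j x) \<in> L1"
    using L1 by (simp add: cplus_submodule_of_wplus_def)
  have Pw: "\<And>b. b \<in> ?P \<Longrightarrow> ?K b = b" by (auto simp: perp_in_wplus_def wplus_def)
  have Pperp: "\<And>b a. b \<in> ?P \<Longrightarrow> a \<in> L1 \<Longrightarrow> inner b a = 0"
    by (auto simp: perp_in_wplus_def wplus_def)
  have Pmem: "\<And>b. ?K b = b \<Longrightarrow> (\<And>a. a\<in>L1 \<Longrightarrow> inner b a = 0) \<Longrightarrow> b \<in> ?P"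
    by (auto simp: perp_in_wplus_def wplus_def)
  have mm: "m \<in> {1..m}" using m_ge by simp
  have linm: "linear (J m)" using lin mm .
  have sP: "subspace ?P"
    unfolding subspace_def perp_in_wplus_def wplus_def
    by (auto simp: linear_0[OF Klin] linear_add[OF Klin] linear_scale[OF Klin] inner_add_left)
  have Lmem: "\<And>x. x \<in> ?L \<longleftrightarrow> (\<exists>a b. x = a + J m b \<and> a \<in> L1 \<and> b \<in> ?P)"
    by (auto simp: lag_of_def)
  have Lin: "\<And>a b. a \<in> L1 \<Longrightarrow> b \<in> ?P \<Longrightarrow> a + J m b \<in> ?L" using Lmem by blast
  have sL: "subspace ?L"
  proof (rule subspaceI)
    show "0 \<in> ?L" using Lin[of 0 0] subspace_0[OF sL1] subspace_0[OF sP] linear_0[OF linm] by simp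
  next
    fix x y assume "x \<in> ?L" "y \<in> ?L"
    then obtain a b a' b' where x: "x = a + J m b" "a \<in> L1" "b \<in> ?P"
      and y: "y = a' + J m b'" "a' \<in> L1" "b' \<in> ?P" using Lmem by meson
    have "x + y = (a + a') + J m (b + b')" using x y linear_add[OF linm] by (simp add: algebra_simps)
    then show "x + y \<in> ?L" using Lin[OF subspace_add[OF sL1 x(2) y(2)] subspace_add[OF sP x(3) y(3)]] by simp
  next
    fix c x assume "x \<in> ?L"
    then obtain a b where x: "x = a + J m b" "a \<in> L1" "b \<in> ?P" using Lmem by meson
    have "c *\<^sub>R x = c *\<^sub>R a + J m (c *\<^sub>R b)" using x linear_scale[OF linm] by (simp add: algebra_simps)
    then show "c *\<^sub>R x \<in> ?L" using Lin[OF subspace_scale[OF sL1 x(2)] subspace_scale[OF sP x(3)]] by simp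
  qed
  have bz: "bracket_zero m J ?L"
    unfolding bracket_zero_def
  proof (intro ballI)
    fix u v i assume u: "u \<in> ?L" and v: "v \<in> ?L" and i: "i \<in> {1..m}"
    obtain a b where x: "u = a + J m b" "a \<in> L1" "b \<in> ?P" using u Lmem by meson
    obtain a' b' where y: "v = a' + J m b'" "a' \<in> L1" "b' \<in> ?P" using v Lmem by meson
    have e: "inner (J i u) v = inner (J i a) a' + inner (J i a) (J m b') + inner (J i (J m b)) a'
       + inner (J i (J m b)) (J m b')"
      using x y linear_add[OF lin[OF i]] by (simp add: inner_add_left inner_add_right)
    have t1: "inner (J i a) a' = 0"
      using pm_orth[of a' "J i a"] J_pm[OF i, of a] L1w x y by (simp add: inner_commute)
    have t2: "inner (J i a) (J m b') = 0"
      using skew[OF mm, of "J i a" b'] Pperp[of b' "J m (J i a)"] L1c[OF mm i x(2)] y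
      by (simp add: inner_commute)
    have t3: "inner (J i (J m b)) a' = 0"
      using skew[OF i, of "J m b" a'] skew[OF mm, of b "J i a'"] Pperp[of b "J m (J i a')"]
        L1c[OF mm i y(2)] x
      by simp
    have w: "?K (J i (J m b)) = J i (J m b)"
      using J_mp[OF i] J_pm[OF mm] Pw x by simp
    have t4: "inner (J i (J m b)) (J m b') = 0"
      using skew[OF mm, of "J i (J m b)" b'] pm_orth[of b' "J m (J i (J m b))"] J_pm[OF mm w] Pw y
      by (simp add: inner_commute)
    show "inner (J i u) v = 0" using e t1 t2 t3 t4 by simp
  qed
  define Lp where "Lp = {y. \<forall>x\<in>?L. orthogonal x y}"
  have d1: "dim Lp + dim ?L = DIM('v)"
    using dim_subspace_orthogonal_to_vectors[of ?L UNIV] sL unfolding Lp_def by simp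
  have d2: "dim (J m ` ?L) = dim ?L"
    by (rule dim_image_eq[OF linm]) (use Jinj[OF mm] in \<open>auto intro: inj_on_subset\<close>)
  have img: "J m ` ?L = Lp"
  proof
    show "J m ` ?L \<subseteq> Lp"
    proof
      fix y assume "y \<in> J m ` ?L"
      then obtain x where x: "x \<in> ?L" "y = J m x" by blast
      have "inner z (J m x) = 0" if "z \<in> ?L" for z
        using bz that x skew[OF mm, of z x] unfolding bracket_zero_def using mm by auto
      then show "y \<in> Lp" unfolding Lp_def orthogonal_def using x by simp
    qed
  next
    show "Lp \<subseteq> J m ` ?L"
    proof
      fix y assume y: "y \<in> Lp"
      have yo: "\<And>z. z \<in> ?L \<Longrightarrow> inner z y = 0" using y unfolding Lp_def orthogonal_def by simp
      define x where "x = - J m y"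
      have Jx: "J m x = y" unfolding x_def using linear_neg[OF linm] sq[OF mm] by simp
      define xp where "xp = (1/2) *\<^sub>R (x + ?K x)"
      define xm where "xm = (1/2) *\<^sub>R (x - ?K x)"
      have xd: "x = xp + xm" and Kxp: "?K xp = xp" and Kxm: "?K xm = - xm"
        unfolding xp_def xm_def using decomp by auto
      have yd: "y = J m xp + J m xm" using Jx xd linear_add[OF linm] by metis
      have xpL1: "xp \<in> L1"
      proof -
        have "xp \<in> orthogonal_comp (orthogonal_comp L1)"
          unfolding orthogonal_comp_def orthogonal_def
        proof (intro CollectI ballI)
          fix z assume "z \<in> {x. \<forall>y\<in>L1. inner y x = 0}"
          then have z: "\<And>a. a \<in> L1 \<Longrightarrow> inner a z = 0" by simp
          define zp where "zp = (1/2) *\<^sub>R (z + ?K z)"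
          define zm where "zm = (1/2) *\<^sub>R (z - ?K z)"
          have zd: "z = zp + zm" and Kzp: "?K zp = zp" and Kzm: "?K zm = - zm"
            unfolding zp_def zm_def using decomp by auto
          have "inner zp a = 0" if "a \<in> L1" for a
          proof -
            have "inner a zm = 0" using pm_orth[of a zm] L1w that Kzm by simp
            then show ?thesis using z[OF that] zd by (simp add: inner_add_right inner_commute)
          qed
          then have zpP: "zp \<in> ?P" using Pmem Kzp by blast
          have "J m zp \<in> ?L" using Lin[of 0 zp] zpP subspace_0[OF sL1] by simp
          then have "inner (J m zp) y = 0" using yo by simp
          then have "inner zp x = 0" using Jx orth[OF mm] by metis
          moreover have "inner zp xm = 0" using pm_orth Kzp Kxm by simp
          moreover have "inner zm xp = 0" using pm_orth Kxp Kzm by (simp add: inner_commute)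
          ultimately show "inner z xp = 0" using xd zd by (simp add: inner_add_left inner_add_right)
        qed
        then show ?thesis using orthogonal_comp_self[OF sL1] by simp
      qed
      define b where "b = - J m xm"
      have Jb: "J m b = xm" unfolding b_def using linear_neg[OF linm] sq[OF mm] by simp
      have Kb: "?K b = b" unfolding b_def using J_mp[OF mm Kxm] linear_neg[OF Klin] by simp
      have "inner b a = 0" if a: "a \<in> L1" for a
      proof -
        have aL: "a \<in> ?L" using Lin[of a 0] a subspace_0[OF sP] linear_0[OF linm] by simp
        have "inner a y = 0" using yo aL by simp
        moreover have "inner a (J m xp) = 0" using pm_orth[of a "J m xp"] L1w a J_pm[OF mm Kxp] by simp
        ultimately have "inner a (J m xm) = 0" using yd by (simp add: inner_add_right)
        then show ?thesis unfolding b_def by (simp add: inner_commute)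
      qed
      then have bP: "b \<in> ?P" using Pmem Kb by blast
      have "x \<in> ?L" using Lin[OF xpL1 bP] Jb xd by simp
      then show "y \<in> J m ` ?L" using Jx by blast
    qed
  qed
  have "2 * dim ?L = DIM('v)" using d1 d2 img by simp
  then show ?thesis unfolding lagrangian_def using sL bz by simp
qed


lemma part2:
  assumes LL: "lagrangian m J L"
  shows "\<exists>L1. cplus_submodule_of_wplus m J L1 \<and> L = lag_of m J L1"
proof -
  let ?K = "Kop J m"
  have sL: "subspace L" and bz0: "bracket_zero m J L" and dL: "2 * dim L = DIM('v)"
    using LL by (auto simp: lagrangian_def)
  have bz: "\<And>u v i. u \<in> L \<Longrightarrow> v \<in> L \<Longrightarrow> i \<in> {1..m} \<Longrightarrow> inner (J i u) v = 0"
    using bz0 unfolding bracket_zero_def by blast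
  have mm: "m \<in> {1..m}" using m_ge by simp
  have linm: "linear (J m)" using lin mm .
  define Lp where "Lp = orthogonal_comp L"
  have sLp: "subspace Lp" unfolding Lp_def by (rule subspace_orthogonal_comp)
  have LLp: "L = orthogonal_comp Lp" unfolding Lp_def using orthogonal_comp_self[OF sL] by simp
  have "Lp = {y \<in> UNIV. \<forall>x\<in>L. orthogonal x y}" unfolding Lp_def orthogonal_comp_def by simp
  then have dLp: "dim Lp + dim L = DIM('v)"
    using dim_subspace_orthogonal_to_vectors[of L UNIV] sL by simp
  have JLL: "J i x \<in> Lp" if i: "i \<in> {1..m}" and x: "x \<in> L" for i x
    unfolding Lp_def orthogonal_comp_def orthogonal_def
    using bz[OF x _ i] by (simp add: inner_commute)
  have JL: "J i ` L = Lp" if i: "i \<in> {1..m}" for i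
  proof (rule subspace_dim_equal)
    show "subspace (J i ` L)" by (rule linear_subspace_image[OF lin[OF i] sL])
    show "subspace Lp" by (rule sLp)
    show "J i ` L \<subseteq> Lp" using JLL i by blast
    have "dim (J i ` L) = dim L"
      by (rule dim_image_eq[OF lin[OF i]]) (use Jinj[OF i] in \<open>auto intro: inj_on_subset\<close>)
    then show "dim Lp \<le> dim (J i ` L)" using dLp dL by simp
  qed
  have JLp: "J i x \<in> L" if i: "i \<in> {1..m}" and x: "x \<in> Lp" for i x
  proof -
    have "orthogonal z (J i x)" if z: "z \<in> Lp" for z
    proof -
      obtain w where w: "w \<in> L" "z = J i w" using z JL[OF i] by blast
      have "orthogonal w x" using x w unfolding Lp_def orthogonal_comp_def by simp
      then show ?thesis using w orth[OF i] unfolding orthogonal_def by simp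
    qed
    then show ?thesis using LLp unfolding orthogonal_comp_def by auto
  qed
  have Kgen: "k \<le> m \<Longrightarrow> (\<forall>x\<in>L. Kop J k x \<in> (if even k then L else Lp)) \<and>
                          (\<forall>x\<in>Lp. Kop J k x \<in> (if even k then Lp else L))" for k
  proof (induction k)
    case 0 then show ?case by simp
  next
    case (Suc k)
    have k: "Suc k \<in> {1..m}" using Suc.prems by simp
    show ?case
    proof (intro conjI ballI)
      fix x assume "x \<in> L"
      then have "J (Suc k) x \<in> Lp" using JLL[OF k] by simp
      then show "Kop J (Suc k) x \<in> (if even (Suc k) then L else Lp)"
        using Suc by auto
    next
      fix x assume "x \<in> Lp"
      then have "J (Suc k) x \<in> L" using JLp[OF k] by simp
      then show "Kop J (Suc k) x \<in> (if even (Suc k) then Lp else L)"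
        using Suc by auto
    qed
  qed
  have KL: "?K x \<in> L" if "x \<in> L" for x using Kgen[of m] m_even that by simp
  define L1 where "L1 = L \<inter> wplus m J"
  have L1w: "\<And>x. x \<in> L1 \<Longrightarrow> ?K x = x" unfolding L1_def wplus_def by simp
  have L1L: "L1 \<subseteq> L" unfolding L1_def by simp
  have L1mem: "\<And>x. x \<in> L \<Longrightarrow> ?K x = x \<Longrightarrow> x \<in> L1" unfolding L1_def wplus_def by simp
  have cp: "cplus_submodule_of_wplus m J L1"
    unfolding cplus_submodule_of_wplus_def
  proof (intro conjI ballI)
    show "subspace L1" unfolding L1_def by (rule subspace_inter[OF sL wplus_sub])
    show "L1 \<subseteq> wplus m J" unfolding L1_def by simp
    fix i j x assume i: "i \<in> {1..m}" and j: "j \<in> {1..m}" and x: "x \<in> L1"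
    have "J i (J j x) \<in> L" using JLp[OF i JLL[OF j]] x L1L by auto
    moreover have "?K (J i (J j x)) = J i (J j x)" using J_mp[OF i J_pm[OF j L1w[OF x]]] .
    ultimately show "J i (J j x) \<in> L1" using L1mem by simp
  qed
  let ?P = "perp_in_wplus m J L1"
  have Pmem: "\<And>b. ?K b = b \<Longrightarrow> (\<And>a. a\<in>L1 \<Longrightarrow> inner b a = 0) \<Longrightarrow> b \<in> ?P"
    by (auto simp: perp_in_wplus_def wplus_def)
  have Pw: "\<And>b. b \<in> ?P \<Longrightarrow> ?K b = b" by (auto simp: perp_in_wplus_def wplus_def)
  have Pperp: "\<And>b a. b \<in> ?P \<Longrightarrow> a \<in> L1 \<Longrightarrow> inner b a = 0"
    by (auto simp: perp_in_wplus_def wplus_def)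
  have "L = lag_of m J L1"
  proof
    show "L \<subseteq> lag_of m J L1"
    proof
      fix x assume x: "x \<in> L"
      define xp where "xp = (1/2) *\<^sub>R (x + ?K x)"
      define xm where "xm = (1/2) *\<^sub>R (x - ?K x)"
      have xd: "x = xp + xm" and Kxp: "?K xp = xp" and Kxm: "?K xm = - xm"
        unfolding xp_def xm_def using decomp by auto
      have xpL: "xp \<in> L" unfolding xp_def
        by (rule subspace_scale[OF sL], rule subspace_add[OF sL x KL[OF x]])
      have xmL: "xm \<in> L" unfolding xm_def
        by (rule subspace_scale[OF sL], rule subspace_diff[OF sL x KL[OF x]])
      have xp1: "xp \<in> L1" using L1mem xpL Kxp by simp
      define b where "b = - J m xm"
      have Jb: "J m b = xm" unfolding b_def using linear_neg[OF linm] sq[OF mm] by simp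
      have Kb: "?K b = b" unfolding b_def using J_mp[OF mm Kxm] linear_neg[OF Klin] by simp
      have "inner b a = 0" if a: "a \<in> L1" for a
        using bz[OF xmL _ mm, of a] a L1L unfolding b_def by auto
      then have bP: "b \<in> ?P" using Pmem Kb by blast
      show "x \<in> lag_of m J L1" unfolding lag_of_def using xd xp1 bP Jb by auto
    qed
  next
    show "lag_of m J L1 \<subseteq> L"
    proof
      fix y assume "y \<in> lag_of m J L1"
      then obtain a b where y: "y = a + J m b" "a \<in> L1" "b \<in> ?P" unfolding lag_of_def by blast
      have "J m b \<in> orthogonal_comp Lp"
        unfolding orthogonal_comp_def
      proof (intro CollectI ballI)
        fix z assume "z \<in> Lp"
        then obtain w where w: "w \<in> L" "z = J m w" using JL[OF mm] by blast
        define wp where "wp = (1/2) *\<^sub>R (w + ?K w)"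
        define wm where "wm = (1/2) *\<^sub>R (w - ?K w)"
        have wd: "w = wp + wm" and Kwp: "?K wp = wp" and Kwm: "?K wm = - wm"
          unfolding wp_def wm_def using decomp by auto
        have wpL: "wp \<in> L" unfolding wp_def
          by (rule subspace_scale[OF sL], rule subspace_add[OF sL w(1) KL[OF w(1)]])
        have "inner b wp = 0" using Pperp[OF y(3)] L1mem[OF wpL Kwp] by simp
        moreover have "inner b wm = 0" using pm_orth[OF Pw[OF y(3)] Kwm] .
        ultimately have "inner b w = 0" using wd by (simp add: inner_add_right)
        then show "orthogonal z (J m b)" using w orth[OF mm] unfolding orthogonal_def
          by (simp add: inner_commute)
      qed
      then have "J m b \<in> L" using LLp by simp
      then show "y \<in> L" using y subspace_add[OF sL] L1L by auto
    qed
  qed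
  then show ?thesis using cp by blast
qed

end

theorem lemma5p17:
  fixes J :: "nat \<Rightarrow> 'v::euclidean_space \<Rightarrow> 'v" and m :: nat
  assumes "clifford_module m J"
    and "m mod 8 = 4"
  shows "(\<forall>L1. cplus_submodule_of_wplus m J L1 \<longrightarrow> lagrangian m J (lag_of m J L1))
       \<and> (\<forall>L. lagrangian m J L \<longrightarrow>
              (\<exists>L1. cplus_submodule_of_wplus m J L1 \<and> L = lag_of m J L1))"
  using part1[OF assms] part2[OF assms] by blast

end
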